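(* Let $(E,X,Y)$, with $X=(X_1,\dots,X_d)$, be generated by a structural causal model whose graph is a DAG, whose distribution is faithful (and Markov) with respect to it, and in which $E$ is exogenous. Let $m<d$, define $S^m_{\mathrm{IAS}}:=\bigcup_{S\in\mathcal{MI},\,|S|\le m}S$, and let $m_{\min}$ and $m_{\max}$ be the size of a smallest and of a largest minimally invariant set, respectively. Then: (i) $S^m_{\mathrm{IAS}}\subseteq\mathrm{AN}_Y$; (ii) if $m\ge m_{\max}$, then $S^m_{\mathrm{IAS}}=S_{\mathrm{IAS}}$; (iii) if $m\ge m_{\min}$ and $E\notin\mathrm{PA}_Y$, then $S^m_{\mathrm{IAS}}\in\mathcal{I}$; (iv) if $m\ge m_{\min}$ and $E\notin\mathrm{PA}_Y$, then $S_{\mathrm{ICP}}\subseteq S^m_{\mathrm{IAS}}$, with equality if and only if $S_{\mathrm{ICP}}\in\mathcal{I}$.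
   Context: $\mathrm{PA}_Y$ and $\mathrm{AN}_Y$ are the parents and ancestors of $Y$ in the DAG (indices $j\in[d]$ identified with $X_j$). $S\subseteq[d]$ is invariant if $Y\perp\!\!\!\perp E\mid X_S$; $\mathcal{I}$ is the collection of invariant sets; $S$ is minimally invariant if $S\in\mathcal{I}$ and no proper subset of $S$ is in $\mathcal{I}$; $\mathcal{MI}$ is the collection of minimally invariant sets. $S_{\mathrm{IAS}}=\bigcup_{S\in\mathcal{MI}}S$ and $S_{\mathrm{ICP}}=\bigcap_{S\in\mathcal{I}}S$ (with $S_{\mathrm{ICP}}=\emptyset$ if $\mathcal{I}=\emptyset$; unions over empty collections are $\emptyset$). *)

theory Defs
  imports Main
begin

datatype node = Env | Resp | Cov nat

definition nodes :: "nat \<Rightarrow> node set" where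
  "nodes d = {Env, Resp} \<union> Cov ` {1..d}"

text \<open>A graph is an edge relation; G a b means a directed edge a -> b.\<close>
definition is_dag :: "nat \<Rightarrow> (node \<Rightarrow> node \<Rightarrow> bool) \<Rightarrow> bool" where
  "is_dag d G \<longleftrightarrow> (\<forall>a b. G a b \<longrightarrow> a \<in> nodes d \<and> b \<in> nodes d) \<and> (\<forall>v. \<not> G\<^sup>+\<^sup>+ v v)"

definition adj :: "(node \<Rightarrow> node \<Rightarrow> bool) \<Rightarrow> node \<Rightarrow> node \<Rightarrow> bool" where
  "adj G a b \<longleftrightarrow> G a b \<or> G b a"

definition is_path :: "nat \<Rightarrow> (node \<Rightarrow> node \<Rightarrow> bool) \<Rightarrow> node list \<Rightarrow> bool" where
  "is_path d G p \<longleftrightarrow> p \<noteq> [] \<and> distinct p \<and> set p \<subseteq> nodes d \<and>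
     (\<forall>i. Suc i < length p \<longrightarrow> adj G (p ! i) (p ! Suc i))"

definition collider :: "(node \<Rightarrow> node \<Rightarrow> bool) \<Rightarrow> node list \<Rightarrow> nat \<Rightarrow> bool" where
  "collider G p i \<longleftrightarrow> G (p ! (i - 1)) (p ! i) \<and> G (p ! Suc i) (p ! i)"

definition d_connecting :: "(node \<Rightarrow> node \<Rightarrow> bool) \<Rightarrow> node list \<Rightarrow> node set \<Rightarrow> bool" where
  "d_connecting G p Z \<longleftrightarrow> (\<forall>i. 0 < i \<and> Suc i < length p \<longrightarrow>
     (if collider G p i then (\<exists>w. G\<^sup>*\<^sup>* (p ! i) w \<and> w \<in> Z) else p ! i \<notin> Z))"

definition d_separated :: "nat \<Rightarrow> (node \<Rightarrow> node \<Rightarrow> bool) \<Rightarrow> node set \<Rightarrow> node set \<Rightarrow> node set \<Rightarrow> bool" where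
  "d_separated d G A B Z \<longleftrightarrow>
     (\<forall>p. is_path d G p \<and> hd p \<in> A \<and> last p \<in> B \<longrightarrow> \<not> d_connecting G p Z)"

text \<open>Markov and faithful: for disjoint sets of nodes, conditional independence
(of the joint distribution of (E,X,Y)) holds iff d-separation holds.\<close>
definition markov_faithful ::
  "nat \<Rightarrow> (node \<Rightarrow> node \<Rightarrow> bool) \<Rightarrow> (node set \<Rightarrow> node set \<Rightarrow> node set \<Rightarrow> bool) \<Rightarrow> bool" where
  "markov_faithful d G indep \<longleftrightarrow>
     (\<forall>A B Z. A \<subseteq> nodes d \<and> B \<subseteq> nodes d \<and> Z \<subseteq> nodes d \<and>
        A \<inter> B = {} \<and> A \<inter> Z = {} \<and> B \<inter> Z = {} \<longrightarrow>
        (indep A B Z \<longleftrightarrow> d_separated d G A B Z))"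

definition exogenous :: "(node \<Rightarrow> node \<Rightarrow> bool) \<Rightarrow> node \<Rightarrow> bool" where
  "exogenous G v \<longleftrightarrow> (\<forall>u. \<not> G u v)"

definition parents :: "(node \<Rightarrow> node \<Rightarrow> bool) \<Rightarrow> node \<Rightarrow> node set" where
  "parents G v = {u. G u v}"

definition AN_Y :: "nat \<Rightarrow> (node \<Rightarrow> node \<Rightarrow> bool) \<Rightarrow> nat set" where
  "AN_Y d G = {j \<in> {1..d}. G\<^sup>+\<^sup>+ (Cov j) Resp}"

definition invariant :: "nat \<Rightarrow> (node set \<Rightarrow> node set \<Rightarrow> node set \<Rightarrow> bool) \<Rightarrow> nat set \<Rightarrow> bool" where
  "invariant d indep S \<longleftrightarrow> S \<subseteq> {1..d} \<and> indep {Resp} {Env} (Cov ` S)"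

definition Inv :: "nat \<Rightarrow> (node set \<Rightarrow> node set \<Rightarrow> node set \<Rightarrow> bool) \<Rightarrow> nat set set" where
  "Inv d indep = {S. invariant d indep S}"

definition MI :: "nat \<Rightarrow> (node set \<Rightarrow> node set \<Rightarrow> node set \<Rightarrow> bool) \<Rightarrow> nat set set" where
  "MI d indep = {S \<in> Inv d indep. \<forall>T. T \<subset> S \<longrightarrow> T \<notin> Inv d indep}"

definition S_IAS :: "nat \<Rightarrow> (node set \<Rightarrow> node set \<Rightarrow> node set \<Rightarrow> bool) \<Rightarrow> nat set" where
  "S_IAS d indep = \<Union> (MI d indep)"

definition S_IAS_m :: "nat \<Rightarrow> (node set \<Rightarrow> node set \<Rightarrow> node set \<Rightarrow> bool) \<Rightarrow> nat \<Rightarrow> nat set" where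
  "S_IAS_m d indep m = \<Union> {S \<in> MI d indep. card S \<le> m}"

definition S_ICP :: "nat \<Rightarrow> (node set \<Rightarrow> node set \<Rightarrow> node set \<Rightarrow> bool) \<Rightarrow> nat set" where
  "S_ICP d indep = (if Inv d indep = {} then {} else \<Inter> (Inv d indep))"

definition m_min :: "nat \<Rightarrow> (node set \<Rightarrow> node set \<Rightarrow> node set \<Rightarrow> bool) \<Rightarrow> nat" where
  "m_min d indep = Min (card ` MI d indep)"

definition m_max :: "nat \<Rightarrow> (node set \<Rightarrow> node set \<Rightarrow> node set \<Rightarrow> bool) \<Rightarrow> nat" where
  "m_max d indep = Max (card ` MI d indep)"

end

theory Submission
  imports Defs
begin

lemma dconn_right:
  assumes dc: "d_connecting G p Z" and ad: "\<forall>i. Suc i < length p \<longrightarrow> adj G (p!i) (p!Suc i)"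
  shows "Suc i < length p \<Longrightarrow> G (p!i) (p!Suc i) \<Longrightarrow>
    G\<^sup>*\<^sup>* (p!i) (last p) \<or> (\<exists>w\<in>Z. G\<^sup>*\<^sup>* (p!i) w)"
proof (induction "length p - i" arbitrary: i rule: less_induct)
  case less
  show ?case
  proof (cases "Suc (Suc i) < length p")
    case False
    then have "p!Suc i = last p" using less.prems
      by (metis Suc_lessI diff_Suc_1 last_conv_nth list.size(3) not_less_zero)
    then show ?thesis using less.prems(2) by auto
  next
    case True
    show ?thesis
    proof (cases "collider G p (Suc i)")
      case True
      have "if collider G p (Suc i) then (\<exists>w. G\<^sup>*\<^sup>* (p ! Suc i) w \<and> w \<in> Z) else p ! Suc i \<notin> Z"
        using dc \<open>Suc (Suc i) < length p\<close> unfolding d_connecting_def by blast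
      then obtain w where "G\<^sup>*\<^sup>* (p!Suc i) w" "w \<in> Z" using True by auto
      then show ?thesis using less.prems(2) by (meson converse_rtranclp_into_rtranclp)
    next
      case False
      then have "\<not> G (p!Suc(Suc i)) (p!Suc i)" using less.prems(2) by (simp add: collider_def)
      then have e: "G (p!Suc i) (p!Suc(Suc i))" using ad True by (auto simp: adj_def)
      have "G\<^sup>*\<^sup>* (p!Suc i) (last p) \<or> (\<exists>w\<in>Z. G\<^sup>*\<^sup>* (p!Suc i) w)"
        using less.hyps[of "Suc i"] e True less.prems by auto
      then show ?thesis using less.prems(2) by (meson converse_rtranclp_into_rtranclp)
    qed
  qed
qed

lemma dconn_left:
  assumes dc: "d_connecting G p Z" and ad: "\<forall>i. Suc i < length p \<longrightarrow> adj G (p!i) (p!Suc i)"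
  shows "0 < i \<Longrightarrow> i < length p \<Longrightarrow> G (p!i) (p!(i-1)) \<Longrightarrow>
    G\<^sup>*\<^sup>* (p!i) (hd p) \<or> (\<exists>w\<in>Z. G\<^sup>*\<^sup>* (p!i) w)"
proof (induction i rule: less_induct)
  case (less i)
  show ?case
  proof (cases "i = 1")
    case True
    have "p \<noteq> []" using less.prems by auto
    then have "p!(i-1) = hd p" using True by (simp add: hd_conv_nth)
    then show ?thesis using less.prems(3) by auto
  next
    case False
    then obtain j where ij: "i = Suc (Suc j)" using less.prems(1)
      by (metis One_nat_def gr0_implies_Suc not0_implies_Suc)
    have col: "G (p!Suc (Suc j)) (p!Suc j)" using less.prems(3) ij by simp
    show ?thesis
    proof (cases "collider G p (Suc j)")
      case True
      have "if collider G p (Suc j) then (\<exists>w. G\<^sup>*\<^sup>* (p ! Suc j) w \<and> w \<in> Z) else p ! Suc j \<notin> Z"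
        using dc less.prems ij unfolding d_connecting_def by blast
      then obtain w where "G\<^sup>*\<^sup>* (p!Suc j) w" "w \<in> Z" using True by auto
      then show ?thesis using less.prems(3) ij by (metis converse_rtranclp_into_rtranclp diff_Suc_1)
    next
      case False
      then have "\<not> G (p!j) (p!Suc j)" using col by (simp add: collider_def)
      moreover have "adj G (p!j) (p!Suc j)" using ad less.prems ij by auto
      ultimately have e: "G (p!Suc j) (p!j)" by (auto simp: adj_def)
      have "G\<^sup>*\<^sup>* (p!Suc j) (hd p) \<or> (\<exists>w\<in>Z. G\<^sup>*\<^sup>* (p!Suc j) w)"
        using less.IH[of "Suc j"] e less.prems ij by auto
      then show ?thesis using less.prems(3) ij by (metis converse_rtranclp_into_rtranclp diff_Suc_1)
    qed
  qed
qed

lemma dconn_drop: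
  assumes "\<forall>i. j < i \<and> Suc i < length p \<longrightarrow>
     (if collider G p i then (\<exists>w. G\<^sup>*\<^sup>* (p ! i) w \<and> w \<in> Z) else p ! i \<notin> Z)"
  shows "d_connecting G (drop j p) Z"
  unfolding d_connecting_def
proof (intro allI impI)
  fix i assume i: "0 < i \<and> Suc i < length (drop j p)"
  then obtain k where k: "i = Suc k" by (metis gr0_implies_Suc)
  have "Suc i < length p - j" using i by simp
  then have jl: "j \<le> length p" and ji: "Suc (j+i) < length p" by arith+
  have c: "collider G (drop j p) i = collider G p (j+i)"
    unfolding collider_def using jl k i by (simp add: nth_drop)
  have n: "drop j p ! i = p ! (j+i)" using jl by (simp add: nth_drop)
  show "if collider G (drop j p) i then \<exists>w. G\<^sup>*\<^sup>* (drop j p ! i) w \<and> w \<in> Z else drop j p ! i \<notin> Z"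
    using assms[rule_format, of "j+i"] i c n ji by auto
qed

lemma dconn_drop':
  assumes "d_connecting G p Z" shows "d_connecting G (drop j p) Z"
  using assms by (intro dconn_drop) (auto simp: d_connecting_def)

lemma is_path_drop:
  assumes "is_path d G p" "j < length p" shows "is_path d G (drop j p)"
  using assms unfolding is_path_def
  by (auto simp: nth_drop dest: in_set_dropD)

lemma is_path_cons:
  assumes "is_path d G q" "x \<notin> set q" "x \<in> nodes d" "adj G x (hd q)"
  shows "is_path d G (x # q)"
  using assms unfolding is_path_def
  apply (auto simp: hd_conv_nth)
  subgoal for i by (cases i) (auto simp: hd_conv_nth)
  done

lemma dconn_cons:
  assumes "d_connecting G q Z" "q \<noteq> []"
    "Suc 0 < length q \<longrightarrow> \<not> G x (hd q) \<and> hd q \<notin> Z"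
  shows "d_connecting G (x # q) Z"
  unfolding d_connecting_def
proof (intro allI impI)
  fix i assume i: "0 < i \<and> Suc i < length (x # q)"
  show "if collider G (x # q) i then \<exists>w. G\<^sup>*\<^sup>* ((x # q) ! i) w \<and> w \<in> Z else (x # q) ! i \<notin> Z"
  proof (cases "i = 1")
    case True
    then have "\<not> collider G (x # q) i" using assms(2,3) i by (auto simp: collider_def hd_conv_nth)
    then show ?thesis using True assms(2,3) i by (auto simp: hd_conv_nth)
  next
    case False
    then obtain k where k: "i = Suc (Suc k)" using i by (metis One_nat_def gr0_implies_Suc not0_implies_Suc)
    have "collider G (x # q) i = collider G q (Suc k)" unfolding collider_def k by simp
    then show ?thesis using assms(1) i k unfolding d_connecting_def by auto
  qed
qed

lemma inv_iff:
  assumes mf: "markov_faithful d G indep"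
  shows "invariant d indep S \<longleftrightarrow> S \<subseteq> {1..d} \<and> d_separated d G {Resp} {Env} (Cov ` S)"
proof (cases "S \<subseteq> {1..d}")
  case True
  have "Cov ` S \<subseteq> nodes d" using True by (auto simp: nodes_def)
  moreover have "{Resp} \<subseteq> nodes d" "{Env} \<subseteq> nodes d" by (auto simp: nodes_def)
  ultimately have "indep {Resp} {Env} (Cov ` S) \<longleftrightarrow> d_separated d G {Resp} {Env} (Cov ` S)"
    using mf[unfolded markov_faithful_def, rule_format, of "{Resp}" "{Env}" "Cov ` S"] by auto
  then show ?thesis using True by (simp add: invariant_def)
next
  case False then show ?thesis by (simp add: invariant_def)
qed

lemma exo_rt: "exogenous G Env \<Longrightarrow> G\<^sup>*\<^sup>* x Env \<Longrightarrow> x = Env"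
  by (metis exogenous_def rtranclp.cases)

lemma dag_acyc: "is_dag d G \<Longrightarrow> \<not> G\<^sup>+\<^sup>+ v v"
  by (simp add: is_dag_def)

lemma dag_asym: "is_dag d G \<Longrightarrow> G u z \<Longrightarrow> \<not> G z u"
  by (metis dag_acyc tranclp.r_into_trancl tranclp.trancl_into_trancl)

lemma dag_nodes: "is_dag d G \<Longrightarrow> G u z \<Longrightarrow> u \<in> nodes d \<and> z \<in> nodes d"
  by (simp add: is_dag_def)

lemma pa_inv:
  assumes dag: "is_dag d G" and exo: "exogenous G Env" and pa: "Env \<notin> parents G Resp"
  shows "d_separated d G {Resp} {Env} (Cov ` {j\<in>{1..d}. G (Cov j) Resp})"
  unfolding d_separated_def
proof (intro allI impI notI)
  define Z where "Z = Cov ` {j\<in>{1..d}. G (Cov j) Resp}"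
  fix p assume P: "is_path d G p \<and> hd p \<in> {Resp} \<and> last p \<in> {Env}"
    and dc0: "d_connecting G p (Cov ` {j\<in>{1..d}. G (Cov j) Resp})"
  have dc: "d_connecting G p Z" using dc0 Z_def by simp
  have ne: "p \<noteq> []" and ds: "distinct p" and sp: "set p \<subseteq> nodes d"
    and ad: "\<forall>i. Suc i < length p \<longrightarrow> adj G (p!i) (p!Suc i)"
    using P by (auto simp: is_path_def)
  have hp: "hd p = Resp" and lp: "last p = Env" using P by auto
  have len: "Suc 0 < length p"
  proof (rule ccontr)
    assume "\<not> ?thesis"
    then have "length p = 1" using ne by (cases p) auto
    then have "hd p = last p" by (cases p) auto
    then show False using hp lp by simp
  qed
  have p0: "p!0 = Resp" using hp ne by (simp add: hd_conv_nth)
  have a01: "adj G (p!0) (p!1)" using ad len by auto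
  have noER: "\<not> G Env Resp" using pa by (simp add: parents_def)
  show False
  proof (cases "G (p!1) Resp")
    case True
    show False
    proof (cases "length p = 2")
      case True
      then have "p!1 = Env" using lp ne by (simp add: last_conv_nth)
      then show False using \<open>G (p!1) Resp\<close> noER by simp
    next
      case False
      then have l2: "Suc 1 < length p" using len by simp
      have nc: "\<not> collider G p 1" using dag_asym[OF dag True] p0 by (simp add: collider_def)
      have "p!1 \<notin> Z" using dc l2 nc unfolding d_connecting_def by fastforce
      moreover have "p!1 \<in> nodes d" using sp len by auto
      moreover have "p!1 \<noteq> Resp" using ds len p0 by (metis One_nat_def nth_eq_iff_index_eq zero_less_Suc less_trans zero_neq_one)
      moreover have "p!1 \<noteq> Env" using True noER by auto
      ultimately show False using True unfolding Z_def nodes_def by auto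
    qed
  next
    case False
    then have "G Resp (p!1)" using a01 p0 by (simp add: adj_def)
    then have "G\<^sup>*\<^sup>* Resp Env \<or> (\<exists>w\<in>Z. G\<^sup>*\<^sup>* Resp w)"
      using dconn_right[OF dc ad, of 0] len p0 lp by auto
    then show False
    proof
      assume "G\<^sup>*\<^sup>* Resp Env" then show False using exo_rt[OF exo] by blast
    next
      assume "\<exists>w\<in>Z. G\<^sup>*\<^sup>* Resp w"
      then obtain j where "G\<^sup>*\<^sup>* Resp (Cov j)" "G (Cov j) Resp" unfolding Z_def by auto
      then have "G\<^sup>+\<^sup>+ Resp Resp" by (simp add: rtranclp_into_tranclp1)
      then show False using dag_acyc[OF dag] by blast
    qed
  qed
qed

lemma anc_restrict:
  assumes dag: "is_dag d G" and exo: "exogenous G Env"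
    and sep: "d_separated d G {Resp} {Env} (Cov ` S)" and Sd: "S \<subseteq> {1..d}"
  shows "d_separated d G {Resp} {Env} (Cov ` (S \<inter> AN_Y d G))"
  unfolding d_separated_def
proof (intro allI impI notI)
  define S' where "S' = S \<inter> AN_Y d G"
  fix p assume P: "is_path d G p \<and> hd p \<in> {Resp} \<and> last p \<in> {Env}"
    and dc0: "d_connecting G p (Cov ` (S \<inter> AN_Y d G))"
  have dc: "d_connecting G p (Cov ` S')" using dc0 S'_def by simp
  have ad: "\<forall>i. Suc i < length p \<longrightarrow> adj G (p!i) (p!Suc i)"
    using P by (auto simp: is_path_def)
  have hp: "hd p = Resp" and lp: "last p = Env" using P by auto
  have "d_connecting G p (Cov ` S)"
    unfolding d_connecting_def
  proof (intro allI impI)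
    fix i assume i: "0 < i \<and> Suc i < length p"
    have h: "if collider G p i then \<exists>w. G\<^sup>*\<^sup>* (p!i) w \<and> w \<in> Cov ` S' else p!i \<notin> Cov ` S'"
      using dc i unfolding d_connecting_def by blast
    show "if collider G p i then \<exists>w. G\<^sup>*\<^sup>* (p!i) w \<and> w \<in> Cov ` S else p!i \<notin> Cov ` S"
    proof (cases "collider G p i")
      case True then show ?thesis using h S'_def by auto
    next
      case False
      have ni: "p!i \<notin> Cov ` S'" using h False by simp
      have key: "G\<^sup>*\<^sup>* (p!i) Resp \<or> G\<^sup>*\<^sup>* (p!i) Env \<or> (\<exists>w\<in>Cov ` S'. G\<^sup>*\<^sup>* (p!i) w)"
      proof -
        have "\<not> G (p!(i-1)) (p!i) \<or> \<not> G (p!Suc i) (p!i)" using False by (simp add: collider_def)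
        moreover have "adj G (p!(i-1)) (p!i)" using ad i
          by (metis Suc_diff_1 Suc_lessD)
        moreover have "adj G (p!i) (p!Suc i)" using ad i by auto
        ultimately have "G (p!i) (p!(i-1)) \<or> G (p!i) (p!Suc i)" by (auto simp: adj_def)
        then show ?thesis
          using dconn_left[OF dc ad, of i] dconn_right[OF dc ad, of i] i hp lp by auto
      qed
      show ?thesis
      proof (rule ccontr)
        assume "\<not> ?thesis"
        then obtain t where t: "t \<in> S" "p!i = Cov t" using False by auto
        have "G\<^sup>+\<^sup>+ (Cov t) Resp"
        proof -
          { assume "G\<^sup>*\<^sup>* (Cov t) Resp"
            then have ?thesis using rtranclpD[of G "Cov t" Resp] by auto }
          moreover
          { assume "G\<^sup>*\<^sup>* (Cov t) Env"
            then have False using exo_rt[OF exo] by blast }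
          moreover
          { assume "\<exists>w\<in>Cov ` S'. G\<^sup>*\<^sup>* (Cov t) w"
            then obtain t' where "t' \<in> AN_Y d G" "G\<^sup>*\<^sup>* (Cov t) (Cov t')" unfolding S'_def by auto
            then have ?thesis unfolding AN_Y_def by (auto intro: rtranclp_tranclp_tranclp) }
          ultimately show ?thesis using key t by auto
        qed
        then have "t \<in> S'" using t Sd unfolding S'_def AN_Y_def by auto
        then show False using ni t by auto
      qed
    qed
  qed
  then show False using sep P unfolding d_separated_def by auto
qed

lemma superset_inv:
  assumes dag: "is_dag d G"
    and sepS: "d_separated d G {Resp} {Env} (Cov ` S)"
    and ST: "S \<subseteq> T" and TA: "\<forall>t\<in>T. G\<^sup>+\<^sup>+ (Cov t) Resp"
  shows "d_separated d G {Resp} {Env} (Cov ` T)"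
proof (rule ccontr)
  assume "\<not> ?thesis"
  then obtain p where P: "is_path d G p" "hd p = Resp" "last p = Env" and dcT: "d_connecting G p (Cov ` T)"
    unfolding d_separated_def by auto
  define ok where "ok i \<longleftrightarrow> (if collider G p i then (\<exists>w. G\<^sup>*\<^sup>* (p!i) w \<and> w \<in> Cov ` S) else p!i \<notin> Cov ` S)" for i
  have "\<not> d_connecting G p (Cov ` S)" using sepS P unfolding d_separated_def by auto
  then obtain i0 where i0: "0 < i0 \<and> Suc i0 < length p \<and> \<not> ok i0" unfolding d_connecting_def ok_def by blast
  define F where "F = {i. 0 < i \<and> Suc i < length p \<and> \<not> ok i}"
  have finF: "finite F" unfolding F_def by (rule finite_subset[of _ "{..<length p}"]) auto
  have "i0 \<in> F" using i0 F_def by auto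
  define j where "j = Max F"
  have jF: "j \<in> F" using finF \<open>i0 \<in> F\<close> j_def Max_in by blast
  have jmax: "\<And>i. i \<in> F \<Longrightarrow> i \<le> j" using finF j_def by simp
  have j: "0 < j" "Suc j < length p" "\<not> ok j" using jF F_def by auto
  define c where "c = p!j"
  have hT: "if collider G p j then \<exists>w. G\<^sup>*\<^sup>* (p!j) w \<and> w \<in> Cov ` T else p!j \<notin> Cov ` T"
    using dcT j unfolding d_connecting_def by blast
  have colj: "collider G p j"
  proof (rule ccontr)
    assume nc: "\<not> collider G p j"
    then have "p!j \<in> Cov ` S" using j(3) unfolding ok_def by simp
    then show False using hT nc ST by auto
  qed
  have noS: "\<And>u. G\<^sup>*\<^sup>* c u \<Longrightarrow> u \<notin> Cov ` S" using j(3) colj unfolding ok_def c_def by auto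
  have cY: "G\<^sup>*\<^sup>* c Resp"
  proof -
    obtain t where "t \<in> T" "G\<^sup>*\<^sup>* c (Cov t)" using hT colj c_def by auto
    then show ?thesis using TA by (meson rtranclp_trans tranclp_into_rtranclp)
  qed
  have jl: "j < length p" using j by simp
  have q0: "is_path d G (drop j p)" "hd (drop j p) = c" "last (drop j p) = Env"
      "d_connecting G (drop j p) (Cov ` S)"
  proof -
    show "is_path d G (drop j p)" using is_path_drop[OF P(1) jl] .
    show "hd (drop j p) = c" using jl c_def by (simp add: hd_drop_conv_nth)
    show "last (drop j p) = Env" using jl P(3) by simp
    show "d_connecting G (drop j p) (Cov ` S)"
    proof (rule dconn_drop, intro allI impI)
      fix i assume "j < i \<and> Suc i < length p"
      then have "i \<notin> F" using jmax by fastforce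
      then have "ok i" using \<open>j < i \<and> Suc i < length p\<close> j(1) F_def by auto
      then show "if collider G p i then \<exists>w. G\<^sup>*\<^sup>* (p ! i) w \<and> w \<in> Cov ` S else p ! i \<notin> Cov ` S"
        unfolding ok_def .
    qed
  qed
  have claim: "\<And>q. is_path d G q \<Longrightarrow> hd q = u \<Longrightarrow> last q = Env \<Longrightarrow> d_connecting G q (Cov ` S)
      \<Longrightarrow> G\<^sup>*\<^sup>* c u \<Longrightarrow> \<exists>q'. is_path d G q' \<and> hd q' = Resp \<and> last q' = Env \<and> d_connecting G q' (Cov ` S)"
    if "G\<^sup>*\<^sup>* u Resp" for u
    using that
  proof (induction rule: converse_rtranclp_induct)
    case base
    then show ?case by blast
  next
    case (step u z)
    have qne: "q \<noteq> []" using step.prems(1) by (simp add: is_path_def)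
    have cz: "G\<^sup>*\<^sup>* c z" using step.prems(5) step.hyps(1) by (meson rtranclp.rtrancl_into_rtrancl)
    show ?case
    proof (cases "z \<in> set q")
      case True
      then obtain r where r: "r < length q" "q!r = z" by (meson in_set_conv_nth)
      have "is_path d G (drop r q)" using is_path_drop[OF step.prems(1) r(1)] .
      moreover have "hd (drop r q) = z" using r by (simp add: hd_drop_conv_nth)
      moreover have "last (drop r q) = Env" using r step.prems(3) by simp
      moreover have "d_connecting G (drop r q) (Cov ` S)" using dconn_drop'[OF step.prems(4)] .
      ultimately show ?thesis using step.IH cz by blast
    next
      case False
      have zn: "z \<in> nodes d" using dag_nodes[OF dag step.hyps(1)] by simp
      have "adj G z (hd q)" using step.hyps(1) step.prems(2) by (simp add: adj_def)
      then have "is_path d G (z # q)" using is_path_cons[OF step.prems(1) False zn] by simp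
      moreover have "hd (z # q) = z" by simp
      moreover have "last (z # q) = Env" using qne step.prems(3) by simp
      moreover have "d_connecting G (z # q) (Cov ` S)"
      proof (rule dconn_cons[OF step.prems(4) qne], intro impI conjI)
        show "\<not> G z (hd q)" using dag_asym[OF dag step.hyps(1)] step.prems(2) by simp
        show "hd q \<notin> Cov ` S" using noS step.prems(2,5) by simp
      qed
      ultimately show ?thesis using step.IH cz by blast
    qed
  qed
  obtain q' where "is_path d G q'" "hd q' = Resp" "last q' = Env" "d_connecting G q' (Cov ` S)"
    using claim[OF cY q0] by blast
  then show False using sepS unfolding d_separated_def by auto
qed

theorem proposition5:
  fixes d m :: nat
    and G :: "node \<Rightarrow> node \<Rightarrow> bool"
    and indep :: "node set \<Rightarrow> node set \<Rightarrow> node set \<Rightarrow> bool"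
  assumes dag: "is_dag d G"
    and mf: "markov_faithful d G indep"
    and exo: "exogenous G Env"
    and md: "m < d"
  shows "S_IAS_m d indep m \<subseteq> AN_Y d G
         \<and> (m \<ge> m_max d indep \<longrightarrow> S_IAS_m d indep m = S_IAS d indep)
         \<and> (m \<ge> m_min d indep \<and> Env \<notin> parents G Resp \<longrightarrow> S_IAS_m d indep m \<in> Inv d indep)
         \<and> (m \<ge> m_min d indep \<and> Env \<notin> parents G Resp \<longrightarrow>
              S_ICP d indep \<subseteq> S_IAS_m d indep m \<and>
              (S_ICP d indep = S_IAS_m d indep m \<longleftrightarrow> S_ICP d indep \<in> Inv d indep))"
proof -
  have invI: "\<And>S. S \<in> Inv d indep \<longleftrightarrow> S \<subseteq> {1..d} \<and> d_separated d G {Resp} {Env} (Cov ` S)"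
    using inv_iff[OF mf] by (simp add: Inv_def)
  have finInv: "finite (Inv d indep)"
    by (rule finite_subset[of _ "Pow {1..d}"]) (use invI in blast)+
  have MIInv: "MI d indep \<subseteq> Inv d indep" by (auto simp: MI_def)
  have finMI: "finite (MI d indep)" using finInv MIInv finite_subset by blast
  have MIsub: "S \<subseteq> AN_Y d G" if S: "S \<in> MI d indep" for S
  proof -
    have SI: "S \<in> Inv d indep" using S MIInv by auto
    then have "S \<inter> AN_Y d G \<in> Inv d indep"
      using anc_restrict[OF dag exo] invI by auto
    then have "\<not> (S \<inter> AN_Y d G \<subset> S)" using S by (auto simp: MI_def)
    then show ?thesis by auto
  qed
  have ANd: "AN_Y d G \<subseteq> {1..d}" by (auto simp: AN_Y_def)
  have P1: "S_IAS_m d indep m \<subseteq> AN_Y d G"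
    unfolding S_IAS_m_def using MIsub by auto
  have P2: "m \<ge> m_max d indep \<longrightarrow> S_IAS_m d indep m = S_IAS d indep"
  proof
    assume mm: "m \<ge> m_max d indep"
    have "{S \<in> MI d indep. card S \<le> m} = MI d indep"
      using mm finMI unfolding m_max_def by (auto intro: order_trans[OF Max_ge])
    then show "S_IAS_m d indep m = S_IAS d indep" by (simp add: S_IAS_m_def S_IAS_def)
  qed
  have P34: "S_IAS_m d indep m \<in> Inv d indep \<and> S_ICP d indep \<subseteq> S_IAS_m d indep m \<and>
              (S_ICP d indep = S_IAS_m d indep m \<longleftrightarrow> S_ICP d indep \<in> Inv d indep)"
    if h: "m \<ge> m_min d indep" "Env \<notin> parents G Resp"
  proof -
    have "{j\<in>{1..d}. G (Cov j) Resp} \<in> Inv d indep"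
      using pa_inv[OF dag exo h(2)] invI by auto
    then have InvNE: "Inv d indep \<noteq> {}" by auto
    define n where "n = Min (card ` Inv d indep)"
    have "n \<in> card ` Inv d indep" unfolding n_def using finInv InvNE by (intro Min_in) auto
    then obtain S1 where S1: "S1 \<in> Inv d indep" "card S1 = n" by auto
    have S1min: "\<And>T. T \<in> Inv d indep \<Longrightarrow> n \<le> card T" using finInv n_def by simp
    have "S1 \<in> MI d indep"
    proof -
      have "S1 \<subseteq> {1..d}" using S1(1) invI by blast
      then have fS1: "finite S1" using finite_subset by blast
      have "T \<notin> Inv d indep" if T: "T \<subset> S1" for T
      proof
        assume "T \<in> Inv d indep"
        then have "n \<le> card T" by (rule S1min)
        moreover have "card T < card S1" using psubset_card_mono[OF fS1 T] .
        ultimately show False using S1(2) by simp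
      qed
      then show ?thesis using S1 by (simp add: MI_def)
    qed
    then have MINE: "MI d indep \<noteq> {}" by auto
    have "m_min d indep \<in> card ` MI d indep" unfolding m_min_def using finMI MINE by (intro Min_in) auto
    then obtain S0 where S0: "S0 \<in> MI d indep" "card S0 = m_min d indep" by auto
    define U where "U = S_IAS_m d indep m"
    have S0U: "S0 \<subseteq> U" using S0 h(1) unfolding U_def S_IAS_m_def by auto
    have UA: "U \<subseteq> AN_Y d G" using P1 U_def by simp
    have S0sep: "d_separated d G {Resp} {Env} (Cov ` S0)" using S0 MIInv invI by auto
    have "d_separated d G {Resp} {Env} (Cov ` U)"
      using superset_inv[OF dag S0sep S0U] UA by (auto simp: AN_Y_def)
    then have UI: "U \<in> Inv d indep" using UA ANd invI by auto
    have ICP: "S_ICP d indep = \<Inter> (Inv d indep)" using InvNE by (simp add: S_ICP_def)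
    have sub: "S_ICP d indep \<subseteq> U" using ICP S0 MIInv S0U by blast
    have iff: "S_ICP d indep = U \<longleftrightarrow> S_ICP d indep \<in> Inv d indep"
    proof
      assume "S_ICP d indep = U" then show "S_ICP d indep \<in> Inv d indep" using UI by simp
    next
      assume II: "S_ICP d indep \<in> Inv d indep"
      have "\<And>S. S \<in> MI d indep \<Longrightarrow> S = S_ICP d indep"
      proof -
        fix S assume SM: "S \<in> MI d indep"
        then have "S_ICP d indep \<subseteq> S" using ICP MIInv by blast
        moreover have "\<not> S_ICP d indep \<subset> S" using SM II by (auto simp: MI_def)
        ultimately show "S = S_ICP d indep" by blast
      qed
      then have "U \<subseteq> S_ICP d indep" unfolding U_def S_IAS_m_def by auto
      then show "S_ICP d indep = U" using sub by blast
    qed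
    show ?thesis using UI sub iff U_def by simp
  qed
  show ?thesis using P1 P2 P34 by blast
qed

end
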